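(* Let $X$ be a finite set with $|X|\ge 3$, let $T=(V,E)\in B(X)$, let $\mathcal T$ and $\mathcal T'$ be triplet covers of $T$, and let $x\in X$. Then: (P1) for every $v\in\mathring V$, $0\le\deg_{\mathcal T}(v)\le 3$, and $1\le\deg_{\mathcal T}(x)\le|X|-2$; (P2) if $\mathcal T'\subseteq\mathcal T$ then $E(\mathcal T)\subseteq E(\mathcal T')$; in particular, if $\deg_{\mathcal T'}(x)=1$ then $\deg_{\mathcal T}(x)=1$; (P3) if $\mathcal T$ is a minimal triplet cover for $T$, then for every $ab\in\mathcal T$ there is some $v\in\mathring V$ such that $a,v,b$ is a path in $G(\mathcal T)$; (P4) if $v$ is the vertex adjacent to $x$ in $T$, then $\{v,x\}\in E(\mathcal T)$; furthermore $\deg_{\mathcal T}(x)=1$ if and only if $\{v,x\}$ is the only edge of $G(\mathcal T)$ containing $x$; (P5) if $|X|\ge 4$, then $\deg_{\mathcal T}(x)=1$ if and only if $\mathcal T^{-x}$ is a triplet cover of $T-x$; (P6) if $\deg_{\mathcal T}(x)=1$ then $|\mathcal T|\ge|\mathcal T^{-x}|+2$.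
   Context: A binary phylogenetic $X$-tree is an unrooted tree $T=(V,E)$ whose leaf set is $X$ and all of whose non-leaf vertices are unlabelled of degree three; $B(X)$ is the set of such trees; $\mathring V$ is the set of interior vertices. Pairs in $\binom{X}{2}$ are written $ab$, triples $abc$. Given $\mathcal T\subseteq\binom{X}{2}$, a triple $abc$ supports $v\in\mathring V$ if $a,b,c$ lie one in each of the three connected components of $T$ with $v$ and its incident edges removed and $ab,ac,bc\in\mathcal T$; $S_v(\mathcal T)$ is the set of triples supporting $v$. $\mathcal T$ is a triplet cover for $T$ if $S_v(\mathcal T)\ne\emptyset$ for all $v\in\mathring V$; it is minimal if $\mathcal T-\{ab\}$ is not a triplet cover for $T$ for any $ab\in\mathcal T$. The support graph $G(\mathcal T)$ is the bipartite graph with vertex set $X\amalg\mathring V$ and edge set $E(\mathcal T)$, where $\{x,v\}\in E(\mathcal T)$ ($x\in X$, $v\in\mathring V$) iff $x\in A$ for all $A\in S_v(\mathcal T)$; $\deg_{\mathcal T}(p)$ denotes the degree of a vertex $p$ in $G(\mathcal T)$. For $x\in X$, $\mathcal T^{-x}$ is obtained from $\mathcal T$ by removing all pairs containing $x$. For $|X|\ge 4$, $T-x$ is the tree in $B(X-\{x\})$ obtained from $T$ by deleting leaf $x$ and its incident edge and suppressing the resulting degree-2 vertex. *)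

theory Defs
  imports Main
begin

text \<open>Leaves of a phylogenetic
X-tree are identified with the taxa in X (so X is a subset of V).\<close>

definition pairs :: "'v set \<Rightarrow> 'v set set" where
  "pairs X = {p. \<exists>a b. p = {a, b} \<and> a \<noteq> b \<and> a \<in> X \<and> b \<in> X}"

definition adj :: "'v set set \<Rightarrow> ('v \<times> 'v) set" where
  "adj E = {(a, b). {a, b} \<in> E}"

definition vdeg :: "'v set set \<Rightarrow> 'v \<Rightarrow> nat" where
  "vdeg E v = card {e \<in> E. v \<in> e}"

definition is_tree :: "'v set \<Rightarrow> 'v set set \<Rightarrow> bool" where
  "is_tree V E \<longleftrightarrow> finite V \<and> V \<noteq> {} \<and>
     E \<subseteq> pairs V \<and>
     (\<forall>a\<in>V. \<forall>b\<in>V. (a, b) \<in> (adj E)\<^sup>*) \<and>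
     (\<forall>e\<in>E. \<exists>a b. e = {a, b} \<and> (a, b) \<notin> (adj (E - {e}))\<^sup>*)"

definition binary_phylo_tree :: "'v set \<Rightarrow> 'v set \<Rightarrow> 'v set set \<Rightarrow> bool" where
  "binary_phylo_tree X V E \<longleftrightarrow> is_tree V E \<and> X \<subseteq> V \<and>
     (\<forall>v\<in>V. v \<in> X \<longleftrightarrow> vdeg E v = 1) \<and>
     (\<forall>v\<in>V - X. vdeg E v = 3)"

definition interior :: "'v set \<Rightarrow> 'v set \<Rightarrow> 'v set" where
  "interior X V = V - X"

definition separated :: "'v set \<Rightarrow> 'v set set \<Rightarrow> 'v \<Rightarrow> 'v \<Rightarrow> 'v \<Rightarrow> bool" where
  "separated V E v a b \<longleftrightarrow> a \<in> V - {v} \<and> b \<in> V - {v} \<and>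
     (a, b) \<notin> (adj {e \<in> E. v \<notin> e})\<^sup>*"

text \<open>S_v(T): triples supporting v (since T - v has exactly three components,
pairwise separation of a,b,c means one in each component).\<close>
definition supp :: "'v set \<Rightarrow> 'v set set \<Rightarrow> 'v set set \<Rightarrow> 'v \<Rightarrow> 'v set set" where
  "supp V E \<T> v = {{a, b, c} | a b c.
     separated V E v a b \<and> separated V E v a c \<and> separated V E v b c \<and>
     {a, b} \<in> \<T> \<and> {a, c} \<in> \<T> \<and> {b, c} \<in> \<T>}"

definition triplet_cover :: "'v set \<Rightarrow> 'v set \<Rightarrow> 'v set set \<Rightarrow> 'v set set \<Rightarrow> bool" where
  "triplet_cover X V E \<T> \<longleftrightarrow> \<T> \<subseteq> pairs X \<and>
     (\<forall>v\<in>interior X V. supp V E \<T> v \<noteq> {})"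

definition minimal_triplet_cover :: "'v set \<Rightarrow> 'v set \<Rightarrow> 'v set set \<Rightarrow> 'v set set \<Rightarrow> bool" where
  "minimal_triplet_cover X V E \<T> \<longleftrightarrow> triplet_cover X V E \<T> \<and>
     (\<forall>p\<in>\<T>. \<not> triplet_cover X V E (\<T> - {p}))"

text \<open>Edge set E(T) of the support graph G(T) (vertex set X disjoint-union interior);
edges are represented as two-element sets {x, v}.\<close>
definition support_edges :: "'v set \<Rightarrow> 'v set \<Rightarrow> 'v set set \<Rightarrow> 'v set set \<Rightarrow> 'v set set" where
  "support_edges X V E \<T> = {{x, v} | x v. x \<in> X \<and> v \<in> interior X V \<and>
     (\<forall>A\<in>supp V E \<T> v. x \<in> A)}"

definition sdeg :: "'v set \<Rightarrow> 'v set \<Rightarrow> 'v set set \<Rightarrow> 'v set set \<Rightarrow> 'v \<Rightarrow> nat" where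
  "sdeg X V E \<T> p = card {e \<in> support_edges X V E \<T>. p \<in> e}"

definition remove_taxon :: "'v set set \<Rightarrow> 'v \<Rightarrow> 'v set set" where
  "remove_taxon \<T> x = {p \<in> \<T>. x \<notin> p}"

text \<open>T - x: delete leaf x and its edge, suppress its (former) neighbour u.\<close>
definition leaf_nbr :: "'v set set \<Rightarrow> 'v \<Rightarrow> 'v" where
  "leaf_nbr E x = (THE u. {x, u} \<in> E)"

definition del_leaf_V :: "'v set \<Rightarrow> 'v set set \<Rightarrow> 'v \<Rightarrow> 'v set" where
  "del_leaf_V V E x = V - {x, leaf_nbr E x}"

definition del_leaf_E :: "'v set set \<Rightarrow> 'v \<Rightarrow> 'v set set" where
  "del_leaf_E E x = {e \<in> E. leaf_nbr E x \<notin> e} \<union>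
     {{a, b} | a b. {a, leaf_nbr E x} \<in> E \<and> {b, leaf_nbr E x} \<in> E \<and>
        a \<noteq> x \<and> b \<noteq> x \<and> a \<noteq> b}"

end

theory Submission
  imports Defs
begin


lemma pairs_sub: "e \<in> pairs V \<Longrightarrow> e \<subseteq> V"
  unfolding pairs_def by auto

lemma pairsE: assumes "e \<in> pairs V" obtains a b where "e = {a,b}" "a \<noteq> b" "a \<in> V" "b \<in> V"
  using assms unfolding pairs_def by auto

lemma adj_iff[simp]: "(a,b) \<in> adj F \<longleftrightarrow> {a,b} \<in> F"
  unfolding adj_def by simp

lemma rtr_sym: "(a,b) \<in> (adj F)\<^sup>* \<Longrightarrow> (b,a) \<in> (adj F)\<^sup>*"
proof (induction rule: rtrancl_induct)
  case base thus ?case by simp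
next
  case (step y z)
  have "(z,y) \<in> adj F" using step.hyps(2) by (simp add: insert_commute)
  thus ?case using step.IH by (meson converse_rtrancl_into_rtrancl)
qed

lemma adj_mono_rtr: "F \<subseteq> G \<Longrightarrow> (a,b) \<in> (adj F)\<^sup>* \<Longrightarrow> (a,b) \<in> (adj G)\<^sup>*"
proof -
  assume "F \<subseteq> G" then have "adj F \<subseteq> adj G" unfolding adj_def by auto
  then show "(a,b) \<in> (adj F)\<^sup>* \<Longrightarrow> (a,b) \<in> (adj G)\<^sup>*" using rtrancl_mono by blast
qed

definition cls :: "'v set \<Rightarrow> 'v set set \<Rightarrow> 'v \<Rightarrow> 'v set" where
  "cls V F u = {w\<in>V. (u,w) \<in> (adj F)\<^sup>*}"

lemma cls_eq: "(u,v) \<in> (adj F)\<^sup>* \<Longrightarrow> cls V F u = cls V F v"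
proof -
  assume uv: "(u,v) \<in> (adj F)\<^sup>*"
  have vu: "(v,u) \<in> (adj F)\<^sup>*" using rtr_sym[OF uv] .
  show ?thesis unfolding cls_def
  proof (intro set_eqI iffI)
    fix w assume "w \<in> {w \<in> V. (u, w) \<in> (adj F)\<^sup>*}"
    then show "w \<in> {w \<in> V. (v, w) \<in> (adj F)\<^sup>*}" using rtrancl_trans[OF vu] by blast
  next
    fix w assume "w \<in> {w \<in> V. (v, w) \<in> (adj F)\<^sup>*}"
    then show "w \<in> {w \<in> V. (u, w) \<in> (adj F)\<^sup>*}" using rtrancl_trans[OF uv] by blast
  qed
qed

lemma forest_count:
  assumes "finite V"
  shows "finite F \<Longrightarrow> (\<forall>e\<in>F. \<exists>a b. e = {a,b} \<and> a\<in>V \<and> b\<in>V \<and> (a,b) \<notin> (adj (F - {e}))\<^sup>*)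
     \<Longrightarrow> card F + card (cls V F ` V) \<le> card V"
proof (induction F rule: finite_induct)
  case empty
  show ?case using card_image_le[OF assms] by simp
next
  case (insert e F)
  from insert.prems obtain a b where e: "e = {a,b}" "a\<in>V" "b\<in>V" "(a,b) \<notin> (adj (insert e F - {e}))\<^sup>*" by auto
  have FF: "insert e F - {e} = F" using insert.hyps by auto
  have nab: "(a,b) \<notin> (adj F)\<^sup>*" using e FF by simp
  have prF: "\<forall>f\<in>F. \<exists>a b. f = {a,b} \<and> a\<in>V \<and> b\<in>V \<and> (a,b) \<notin> (adj (F - {f}))\<^sup>*"
  proof
    fix f assume f: "f \<in> F"
    then obtain p q where pq: "f = {p,q}" "p\<in>V" "q\<in>V" "(p,q) \<notin> (adj (insert e F - {f}))\<^sup>*"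
      using insert.prems by blast
    have sub: "F - {f} \<subseteq> insert e F - {f}" by auto
    have "(p,q) \<notin> (adj (F - {f}))\<^sup>*" using pq(4) adj_mono_rtr[OF sub, of p q] by blast
    then show "\<exists>a b. f = {a,b} \<and> a\<in>V \<and> b\<in>V \<and> (a,b) \<notin> (adj (F - {f}))\<^sup>*" using pq by blast
  qed
  have IH: "card F + card (cls V F ` V) \<le> card V" using insert.IH prF by blast
  define h where "h C = \<Union> (cls V (insert e F) ` C)" for C
  have hc: "h (cls V F u) = cls V (insert e F) u" if "u \<in> V" for u
  proof -
    have "\<forall>w \<in> cls V F u. cls V (insert e F) w = cls V (insert e F) u"
    proof
      fix w assume "w \<in> cls V F u"
      then have "(u,w) \<in> (adj F)\<^sup>*" unfolding cls_def by simp
      then have "(u,w) \<in> (adj (insert e F))\<^sup>*" using adj_mono_rtr[of F "insert e F"] by blast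
      then show "cls V (insert e F) w = cls V (insert e F) u" using cls_eq[of u w "insert e F" V] by simp
    qed
    moreover have "u \<in> cls V F u" using that unfolding cls_def by simp
    ultimately have "cls V (insert e F) ` cls V F u = {cls V (insert e F) u}" by blast
    then show ?thesis unfolding h_def by simp
  qed
  have "h ` (cls V F ` V) = (\<lambda>u. h (cls V F u)) ` V" by (simp add: image_image)
  also have "\<dots> = cls V (insert e F) ` V" by (rule image_cong) (simp_all add: hc)
  finally have img: "cls V (insert e F) ` V = h ` (cls V F ` V)" by simp
  have ne: "cls V F a \<noteq> cls V F b"
  proof
    assume "cls V F a = cls V F b"
    moreover have "b \<in> cls V F b" using e unfolding cls_def by simp
    ultimately have "b \<in> cls V F a" by simp
    then show False using nab unfolding cls_def by simp
  qed
  have "(a,b) \<in> (adj (insert e F))\<^sup>*" using e by auto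
  then have "cls V (insert e F) a = cls V (insert e F) b" by (rule cls_eq)
  then have heq: "h (cls V F a) = h (cls V F b)" using hc[OF e(2)] hc[OF e(3)] by simp
  have fin: "finite (cls V F ` V)" using assms by simp
  have "\<not> inj_on h (cls V F ` V)"
  proof
    assume "inj_on h (cls V F ` V)"
    moreover have "cls V F a \<in> cls V F ` V" "cls V F b \<in> cls V F ` V" using e by auto
    ultimately have "cls V F a = cls V F b" using heq inj_onD by metis
    then show False using ne by simp
  qed
  hence "card (h ` (cls V F ` V)) \<noteq> card (cls V F ` V)" using inj_on_iff_eq_card fin by blast
  moreover have "card (h ` (cls V F ` V)) \<le> card (cls V F ` V)" by (rule card_image_le[OF fin])
  ultimately have "card (cls V (insert e F) ` V) < card (cls V F ` V)" using img by simp
  moreover have "card (insert e F) = Suc (card F)" using insert.hyps by simp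
  ultimately show ?case using IH by linarith
qed

lemma tree_edges: assumes "is_tree V E" shows "card E + 1 \<le> card V"
proof -
  have finV: "finite V" using assms unfolding is_tree_def by blast
  have EV: "E \<subseteq> pairs V" using assms unfolding is_tree_def by blast
  have conn: "\<forall>a\<in>V. \<forall>b\<in>V. (a,b) \<in> (adj E)\<^sup>*" using assms unfolding is_tree_def by blast
  have ne: "V \<noteq> {}" using assms unfolding is_tree_def by blast
  have br: "\<forall>e\<in>E. \<exists>a b. e = {a, b} \<and> (a, b) \<notin> (adj (E - {e}))\<^sup>*"
    using assms unfolding is_tree_def by blast
  have "E \<subseteq> Pow V" using EV pairs_sub by blast
  hence finE: "finite E" by (rule finite_subset) (simp add: finV)
  have br': "\<forall>e\<in>E. \<exists>a b. e = {a,b} \<and> a\<in>V \<and> b\<in>V \<and> (a,b) \<notin> (adj (E - {e}))\<^sup>*"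
  proof
    fix e assume "e \<in> E"
    then obtain a b where "e = {a,b}" "(a, b) \<notin> (adj (E - {e}))\<^sup>*" using br by blast
    moreover have "e \<subseteq> V" using \<open>e \<in> E\<close> EV pairs_sub by blast
    ultimately show "\<exists>a b. e = {a,b} \<and> a\<in>V \<and> b\<in>V \<and> (a,b) \<notin> (adj (E - {e}))\<^sup>*" by blast
  qed
  have "cls V E ` V = {V}"
  proof -
    have "cls V E u = V" if "u \<in> V" for u using conn that unfolding cls_def by auto
    thus ?thesis using ne by auto
  qed
  thus ?thesis using forest_count[OF finV finE br'] by simp
qed

lemma handshake: assumes "finite V" "E \<subseteq> pairs V" shows "(\<Sum>v\<in>V. vdeg E v) = 2 * card E"
proof -
  have "E \<subseteq> Pow V" using assms(2) pairs_sub by blast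
  hence finE: "finite E" by (rule finite_subset) (simp add: assms(1))
  have "(\<Sum>v\<in>V. vdeg E v) = (\<Sum>v\<in>V. \<Sum>e\<in>E. if v \<in> e then 1 else 0)"
    unfolding vdeg_def using finE by (simp add: sum.inter_filter[symmetric])
  also have "\<dots> = (\<Sum>e\<in>E. \<Sum>v\<in>V. if v \<in> e then 1 else 0)" by (rule sum.swap)
  also have "\<dots> = (\<Sum>e\<in>E. 2)"
  proof (rule sum.cong)
    fix e assume "e \<in> E"
    then obtain a b where ab: "e = {a,b}" "a \<noteq> b" "a \<in> V" "b \<in> V" using assms(2) pairsE by blast
    have "(\<Sum>v\<in>V. if v \<in> e then 1 else 0) = card {v\<in>V. v \<in> e}"
      using assms(1) by (simp add: sum.inter_filter[symmetric])
    also have "{v\<in>V. v \<in> e} = e" using ab by auto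
    finally show "(\<Sum>v\<in>V. if v \<in> e then 1 else (0::nat)) = 2" using ab by simp
  qed simp
  finally show ?thesis by simp
qed

lemma interior_count: assumes "binary_phylo_tree X V E" shows "card (interior X V) + 2 \<le> card X"
proof -
  have tr: "is_tree V E" and XV: "X \<subseteq> V" and lf: "\<forall>v\<in>V. v \<in> X \<longleftrightarrow> vdeg E v = 1"
    and i3: "\<forall>v\<in>V - X. vdeg E v = 3" using assms unfolding binary_phylo_tree_def by auto
  have finV: "finite V" using tr unfolding is_tree_def by blast
  have EV: "E \<subseteq> pairs V" using tr unfolding is_tree_def by blast
  have "(\<Sum>v\<in>V. vdeg E v) = (\<Sum>v\<in>V - X. vdeg E v) + (\<Sum>v\<in>X. vdeg E v)"
    using sum.subset_diff[OF XV finV] by simp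
  also have "(\<Sum>v\<in>V - X. vdeg E v) = (\<Sum>v\<in>V - X. 3)" using i3 by simp
  also have "(\<Sum>v\<in>X. vdeg E v) = (\<Sum>v\<in>X. 1)" using lf XV by (intro sum.cong) auto
  finally have "2 * card E = 3 * card (V - X) + card X" using handshake[OF finV EV] by simp
  moreover have "card E + 1 \<le> card V" using tree_edges[OF tr] .
  moreover have "card V = card (V - X) + card X" using card_Diff_subset[OF finite_subset[OF XV finV] XV]
      card_mono[OF finV XV] by simp
  ultimately show ?thesis unfolding interior_def by simp
qed



lemma deg1_nbr: assumes "E \<subseteq> pairs V" "vdeg E v = 1"
  obtains y where "{v,y} \<in> E" "y \<noteq> v" "\<And>z. {v,z} \<in> E \<Longrightarrow> z = y"
proof -
  from assms(2) obtain e0 where e0: "{e\<in>E. v\<in>e} = {e0}" unfolding vdeg_def using card_1_singletonE by blast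
  hence e0E: "e0 \<in> E" and ve0: "v \<in> e0" by auto
  then obtain p q where pq: "e0 = {p,q}" "p\<noteq>q" using assms(1) pairsE by (metis subsetD)
  obtain y where y: "e0 = {v,y}" "y \<noteq> v" using pq ve0 by auto
  have uq: "z = y" if "{v,z} \<in> E" for z
  proof -
    have "{v,z} \<in> {e\<in>E. v\<in>e}" using that by simp
    hence "{v,z} = {v,y}" using e0 y by simp
    moreover have "z \<noteq> v"
    proof
      assume "z = v"
      hence "{v} \<in> pairs V" using that assms(1) by auto
      thus False unfolding pairs_def by (auto simp: doubleton_eq_iff)
    qed
    ultimately show ?thesis by (auto simp: doubleton_eq_iff)
  qed
  show thesis
  proof (rule that[of y])
    show "{v,y} \<in> E" using y e0E by simp
    show "y \<noteq> v" by (rule y(2))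
    show "\<And>z. {v,z} \<in> E \<Longrightarrow> z = y" by (rule uq)
  qed
qed

lemma deg3_nbrs: assumes "E \<subseteq> pairs V" "vdeg E v = 3" shows "card {y. {v,y} \<in> E} = 3"
proof -
  have "(\<lambda>y. {v,y}) ` {y. {v,y} \<in> E} = {e\<in>E. v \<in> e}"
  proof
    show "(\<lambda>y. {v,y}) ` {y. {v,y} \<in> E} \<subseteq> {e\<in>E. v \<in> e}" by auto
    show "{e\<in>E. v \<in> e} \<subseteq> (\<lambda>y. {v,y}) ` {y. {v,y} \<in> E}"
    proof
      fix e assume "e \<in> {e\<in>E. v\<in>e}"
      then have eE: "e \<in> E" and ve: "v \<in> e" by auto
      then obtain a b where "e = {a,b}" using assms(1) pairsE by (metis subsetD)
      then have eq: "e = {v, (if a = v then b else a)}" using ve by auto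
      show "e \<in> (\<lambda>y. {v,y}) ` {y. {v,y} \<in> E}"
        using eE eq by (intro image_eqI[of _ _ "if a = v then b else a"]) auto
    qed
  qed
  moreover have "inj_on (\<lambda>y. {v,y}) {y. {v,y} \<in> E}" by (auto simp: inj_on_def doubleton_eq_iff)
  ultimately have "card {y. {v,y} \<in> E} = card {e\<in>E. v \<in> e}" using card_image by metis
  thus ?thesis using assms(2) unfolding vdeg_def by simp
qed

lemma sep_ne: "separated V E v a b \<Longrightarrow> a \<noteq> b"
  unfolding separated_def by auto

lemma three_comp:
  assumes EV: "E \<subseteq> pairs V" and conn: "\<forall>a\<in>V. \<forall>b\<in>V. (a,b) \<in> (adj E)\<^sup>*"
    and xu: "{x,u} \<in> E" and xuniq: "\<And>z. {x,z} \<in> E \<Longrightarrow> z = u"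
    and u3: "vdeg E u = 3" and uV: "u \<in> V"
    and A: "A \<in> supp V E S u"
  shows "x \<in> A"
proof -
  define R where "R = adj {e\<in>E. u \<notin> e}"
  have reach: "\<exists>y. {u,y} \<in> E \<and> (y,p) \<in> R\<^sup>*" if "p \<in> V" "p \<noteq> u" for p
  proof -
    have "(u,p) \<in> (adj E)\<^sup>*" using conn uV that by blast
    then have "p = u \<or> (\<exists>y. {u,y} \<in> E \<and> (y,p) \<in> R\<^sup>*)"
    proof (induction rule: rtrancl_induct)
      case base then show ?case by simp
    next
      case (step y0 z)
      have e: "{y0,z} \<in> E" using step.hyps(2) by simp
      show ?case
      proof (cases "y0 = u")
        case True then show ?thesis using e by blast
      next
        case False
        then obtain y where y: "{u,y} \<in> E" "(y,y0) \<in> R\<^sup>*" using step.IH by blast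
        show ?thesis
        proof (cases "z = u")
          case True then show ?thesis by simp
        next
          case False
          then have "(y0,z) \<in> R" using e \<open>y0 \<noteq> u\<close> unfolding R_def by simp
          then have "(y,z) \<in> R\<^sup>*" using y(2) by (rule rtrancl_into_rtrancl[rotated])
          then show ?thesis using y(1) by blast
        qed
      qed
    qed
    then show ?thesis using that by blast
  qed
  have xonly: "p = x" if "(x,p) \<in> R\<^sup>*" for p
    using that
  proof (cases rule: converse_rtranclE)
    case base then show ?thesis by simp
  next
    case (step z)
    then have "{x,z} \<in> E" "u \<notin> {x,z}" unfolding R_def by auto
    then show ?thesis using xuniq by blast
  qed
  define N where "N = {y. {u,y} \<in> E}"
  have cN: "card N = 3" unfolding N_def using deg3_nbrs[OF EV u3] .
  have finN: "finite N" using cN by (metis card.infinite zero_neq_numeral)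
  have xN: "x \<in> N" unfolding N_def using xu by (simp add: insert_commute)
  have cN2: "card (N - {x}) = 2" using cN xN finN by simp
  from A obtain a b c where Aeq: "A = {a,b,c}" and sab: "separated V E u a b"
    and sac: "separated V E u a c" and sbc: "separated V E u b c" unfolding supp_def by blast
  show "x \<in> A"
  proof (rule ccontr)
    assume nx: "x \<notin> A"
    have pick: "\<exists>y \<in> N - {x}. (y,p) \<in> R\<^sup>*" if pp: "p \<in> V" "p \<noteq> u" "p \<noteq> x" for p
    proof -
      obtain y where y: "{u,y} \<in> E" "(y,p) \<in> R\<^sup>*" using reach[OF pp(1,2)] by blast
      moreover have "y \<noteq> x" using xonly pp y by blast
      ultimately show ?thesis unfolding N_def by blast
    qed
    have mem: "a \<in> V" "a \<noteq> u" "b \<in> V" "b \<noteq> u" "c \<in> V" "c \<noteq> u"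
      using sab sac sbc unfolding separated_def by auto
    have nxs: "a \<noteq> x" "b \<noteq> x" "c \<noteq> x" using nx Aeq by auto
    obtain ya where ya: "ya \<in> N - {x}" "(ya,a) \<in> R\<^sup>*" using pick mem nxs by blast
    obtain yb where yb: "yb \<in> N - {x}" "(yb,b) \<in> R\<^sup>*" using pick mem nxs by blast
    obtain yc where yc: "yc \<in> N - {x}" "(yc,c) \<in> R\<^sup>*" using pick mem nxs by blast
    have conn2: "(p,q) \<in> R\<^sup>*" if "(y,p) \<in> R\<^sup>*" "(y,q) \<in> R\<^sup>*" for y p q
    proof -
      have "(p,y) \<in> R\<^sup>*" using that(1) unfolding R_def by (rule rtr_sym)
      then show ?thesis using that(2) by (rule rtrancl_trans)
    qed
    have nab: "(a,b) \<notin> R\<^sup>*" "(a,c) \<notin> R\<^sup>*" "(b,c) \<notin> R\<^sup>*"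
      using sab sac sbc unfolding separated_def R_def by auto
    have "ya \<noteq> yb" using conn2[of ya a b] ya yb nab by auto
    moreover have "ya \<noteq> yc" using conn2[of ya a c] ya yc nab by auto
    moreover have "yb \<noteq> yc" using conn2[of yb b c] yb yc nab by auto
    ultimately have "card {ya,yb,yc} = 3" by simp
    moreover have "card {ya,yb,yc} \<le> card (N - {x})"
      using ya yb yc finN by (intro card_mono) auto
    ultimately show False using cN2 by simp
  qed
qed

lemma lift:
  assumes "w \<noteq> u" "leaf_nbr E x = u"
    and "(a,b) \<in> (adj {e \<in> del_leaf_E E x. w \<notin> e})\<^sup>*"
  shows "(a,b) \<in> (adj {e\<in>E. w\<notin>e})\<^sup>*"
  using assms(3)
proof (induction rule: rtrancl_induct)
  case base then show ?case by simp
next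
  case (step y z)
  then have yz: "{y,z} \<in> del_leaf_E E x" "w \<notin> {y,z}" by auto
  show ?case
  proof (cases "{y,z} \<in> E \<and> u \<notin> {y,z}")
    case True
    then have "(y,z) \<in> adj {e\<in>E. w\<notin>e}" using yz by simp
    then show ?thesis using step.IH by (rule rtrancl_into_rtrancl[rotated])
  next
    case False
    then obtain a' b' where ab: "{y,z} = {a',b'}" "{a',u} \<in> E" "{b',u} \<in> E"
      using yz(1) assms(2) unfolding del_leaf_E_def by auto
    have "{y,u} \<in> E \<and> {z,u} \<in> E" using ab by (auto simp: doubleton_eq_iff)
    then have s1: "(y,u) \<in> adj {e\<in>E. w\<notin>e}" and s2: "(u,z) \<in> adj {e\<in>E. w\<notin>e}"
      using yz(2) assms(1) by (auto simp: insert_commute)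
    have "(a,u) \<in> (adj {e\<in>E. w\<notin>e})\<^sup>*" using step.IH s1 by (rule rtrancl_into_rtrancl)
    then show ?thesis using s2 by (rule rtrancl_into_rtrancl)
  qed
qed

lemma proj:
  assumes "(a,b) \<in> (adj {e\<in>E. w\<notin>e})\<^sup>*" "a \<notin> {x,u}" "leaf_nbr E x = u"
    "\<And>z. {x,z} \<in> E \<Longrightarrow> z = u"
  shows "(b \<notin> {x,u} \<longrightarrow> (a,b) \<in> (adj {e\<in>del_leaf_E E x. w\<notin>e})\<^sup>*) \<and>
    (b \<in> {x,u} \<longrightarrow> (\<exists>y. {y,u}\<in>E \<and> y\<noteq>x \<and> y\<noteq>w \<and> (a,y) \<in> (adj {e\<in>del_leaf_E E x. w\<notin>e})\<^sup>*))"
  using assms(1)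
proof (induction rule: rtrancl_induct)
  case base then show ?case using assms(2) by simp
next
  case (step z z')
  define R' where "R' = adj {e\<in>del_leaf_E E x. w\<notin>e}"
  have e: "{z,z'} \<in> E" "w \<notin> {z,z'}" using step.hyps(2) by auto
  show ?case
  proof (cases "z \<in> {x,u}")
    case zin: True
    then obtain y where y: "{y,u}\<in>E" "y\<noteq>x" "y\<noteq>w" "(a,y) \<in> R'\<^sup>*" using step.IH unfolding R'_def by blast
    show ?thesis
    proof (cases "z' \<in> {x,u}")
      case True then show ?thesis using y unfolding R'_def by blast
    next
      case z'out: False
      have "z = u"
      proof (rule ccontr)
        assume "z \<noteq> u" then have "z = x" using zin by simp
        then have "z' = u" using e(1) assms(4) by simp
        then show False using z'out by simp
      qed
      have zu: "{z',u} \<in> E" using e(1) \<open>z = u\<close> by (simp add: insert_commute)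
      show ?thesis
      proof (cases "y = z'")
        case True then show ?thesis using y z'out unfolding R'_def by simp
      next
        case False
        have "{y,z'} \<in> del_leaf_E E x" unfolding del_leaf_E_def assms(3)
          using y zu z'out False by blast
        moreover have "w \<notin> {y,z'}" using y e(2) by simp
        ultimately have "(y,z') \<in> R'" unfolding R'_def by simp
        then have "(a,z') \<in> R'\<^sup>*" using y(4) by (rule rtrancl_into_rtrancl[rotated])
        then show ?thesis using z'out unfolding R'_def by simp
      qed
    qed
  next
    case zout: False
    then have az: "(a,z) \<in> R'\<^sup>*" using step.IH unfolding R'_def by blast
    show ?thesis
    proof (cases "z' = x")
      case True
      then have "{x,z} \<in> E" using e(1) by (simp add: insert_commute)
      then have "z = u" using assms(4) by blast
      then show ?thesis using zout by simp
    next
      case z'x: False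
      show ?thesis
      proof (cases "z' = u")
        case True
        have "{z,u} \<in> E" using e(1) True by simp
        moreover have "z \<noteq> x" "z \<noteq> w" using zout e(2) by auto
        ultimately show ?thesis using az True unfolding R'_def by blast
      next
        case False
        have "{z,z'} \<in> del_leaf_E E x" unfolding del_leaf_E_def assms(3)
          using e(1) zout False by blast
        then have "(z,z') \<in> R'" using e(2) unfolding R'_def by simp
        then have "(a,z') \<in> R'\<^sup>*" using az by (rule rtrancl_into_rtrancl[rotated])
        then show ?thesis using z'x False unfolding R'_def by simp
      qed
    qed
  qed
qed


theorem proposition1:
  fixes X V :: "'v set" and E :: "'v set set" and \<T> \<T>' :: "'v set set" and x :: 'v
  assumes "finite X" and "card X \<ge> 3"
    and "binary_phylo_tree X V E"
    and "triplet_cover X V E \<T>" and "triplet_cover X V E \<T>'"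
    and "x \<in> X"
  shows
    "((\<forall>v\<in>interior X V. 0 \<le> sdeg X V E \<T> v \<and> sdeg X V E \<T> v \<le> 3)
     \<and> 1 \<le> sdeg X V E \<T> x \<and> sdeg X V E \<T> x \<le> card X - 2)
   \<and>
    (\<T>' \<subseteq> \<T> \<longrightarrow> support_edges X V E \<T> \<subseteq> support_edges X V E \<T>'
       \<and> (sdeg X V E \<T>' x = 1 \<longrightarrow> sdeg X V E \<T> x = 1))
   \<and>
    (minimal_triplet_cover X V E \<T> \<longrightarrow>
       (\<forall>a b. {a, b} \<in> \<T> \<longrightarrow> (\<exists>v\<in>interior X V.
          {a, v} \<in> support_edges X V E \<T> \<and> {v, b} \<in> support_edges X V E \<T>)))
   \<and>
    (\<forall>v. {v, x} \<in> E \<longrightarrow>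
       {v, x} \<in> support_edges X V E \<T> \<and>
       (sdeg X V E \<T> x = 1 \<longleftrightarrow> {e \<in> support_edges X V E \<T>. x \<in> e} = {{v, x}}))
   \<and>
    (card X \<ge> 4 \<longrightarrow>
       (sdeg X V E \<T> x = 1 \<longleftrightarrow>
        triplet_cover (X - {x}) (del_leaf_V V E x) (del_leaf_E E x) (remove_taxon \<T> x)))
   \<and>
    (sdeg X V E \<T> x = 1 \<longrightarrow> card \<T> \<ge> card (remove_taxon \<T> x) + 2)"
proof -
  have tr: "is_tree V E" using assms(3) unfolding binary_phylo_tree_def by blast
  have XV: "X \<subseteq> V" using assms(3) unfolding binary_phylo_tree_def by blast
  have lf: "\<forall>v\<in>V. v \<in> X \<longleftrightarrow> vdeg E v = 1" using assms(3) unfolding binary_phylo_tree_def by blast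
  have i3: "\<forall>v\<in>V - X. vdeg E v = 3" using assms(3) unfolding binary_phylo_tree_def by blast
  have finV: "finite V" using tr unfolding is_tree_def by blast
  have EV: "E \<subseteq> pairs V" using tr unfolding is_tree_def by blast
  have conn: "\<forall>a\<in>V. \<forall>b\<in>V. (a,b) \<in> (adj E)\<^sup>*" using tr unfolding is_tree_def by blast
  have xV: "x \<in> V" using XV assms(6) by blast
  have x1: "vdeg E x = 1" using lf xV assms(6) by blast
  obtain u where xu: "{x,u} \<in> E" "u \<noteq> x" and xuniq: "\<And>z. {x,z} \<in> E \<Longrightarrow> z = u"
    using deg1_nbr[OF EV x1] by metis
  have ln: "leaf_nbr E x = u" unfolding leaf_nbr_def
    by (rule the_equality) (rule xu(1), rule xuniq)
  have uV: "u \<in> V" using xu(1) EV pairs_sub by blast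
  have uX: "u \<notin> X"
  proof
    assume uX: "u \<in> X"
    have u1: "vdeg E u = 1" using lf uV uX by blast
    obtain y' where uy: "{u,y'} \<in> E" and uuniq: "\<And>z. {u,z} \<in> E \<Longrightarrow> z = y'"
      using deg1_nbr[OF EV u1] by metis
    have ux: "{u,x} \<in> E" using xu(1) by (simp add: insert_commute)
    have "y' = x" using uuniq[OF ux] by simp
    have cl: "z \<in> {x,u}" if "(x,z) \<in> (adj E)\<^sup>*" for z
      using that
    proof (induction rule: rtrancl_induct)
      case base then show ?case by simp
    next
      case (step y z)
      then have yz: "{y,z} \<in> E" by simp
      show ?case
      proof (cases "y = x")
        case True then show ?thesis using xuniq yz by simp
      next
        case False
        then have "y = u" using step.IH by simp
        then have "z = x" using uuniq yz \<open>y' = x\<close> by simp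
        then show ?thesis by simp
      qed
    qed
    have "X \<subseteq> {x,u}"
    proof
      fix z assume "z \<in> X"
      then have "z \<in> V" using XV by blast
      then show "z \<in> {x,u}" using cl conn xV by blast
    qed
    then have "card X \<le> card {x,u}" by (intro card_mono) auto
    also have "\<dots> \<le> 2" by (simp add: card_insert_if)
    finally show False using assms(2) by simp
  qed
  have uI: "u \<in> interior X V" unfolding interior_def using uV uX by simp
  have u3: "vdeg E u = 3" using i3 uV uX by blast
  have key: "x \<in> A" if "A \<in> supp V E S u" for S A
    using three_comp[OF EV conn xu(1) xuniq u3 uV that] .
  have intcard: "card (interior X V) + 2 \<le> card X" by (rule interior_count[OF assms(3)])
  have SEfin: "finite (support_edges X V E S)" for S
  proof -
    have "support_edges X V E S \<subseteq> Pow V" unfolding support_edges_def interior_def using XV by auto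
    then show ?thesis by (rule finite_subset) (simp add: finV)
  qed
  have SEx: "{e \<in> support_edges X V E S. x \<in> e} = (\<lambda>w. {x,w}) ` {w \<in> interior X V. \<forall>A\<in>supp V E S w. x \<in> A}" for S
    unfolding support_edges_def interior_def using assms(6) by auto
  have uSE: "{u,x} \<in> support_edges X V E S" for S
  proof -
    have "{u,x} = {x,u}" by (simp add: insert_commute)
    then show ?thesis unfolding support_edges_def using assms(6) uI key by blast
  qed
  have uSEx: "{u,x} \<in> {e \<in> support_edges X V E S. x \<in> e}" for S using uSE by simp
  have one_iff: "sdeg X V E S x = 1 \<longleftrightarrow> {e \<in> support_edges X V E S. x \<in> e} = {{u,x}}" for S
  proof
    assume "sdeg X V E S x = 1"
    then obtain e0 where e0: "{e \<in> support_edges X V E S. x \<in> e} = {e0}"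
      unfolding sdeg_def using card_1_singletonE by blast
    then show "{e \<in> support_edges X V E S. x \<in> e} = {{u,x}}" using uSEx[of S] by simp
  next
    assume "{e \<in> support_edges X V E S. x \<in> e} = {{u,x}}"
    then show "sdeg X V E S x = 1" unfolding sdeg_def by simp
  qed
  have P1: "(\<forall>v\<in>interior X V. 0 \<le> sdeg X V E \<T> v \<and> sdeg X V E \<T> v \<le> 3)
     \<and> 1 \<le> sdeg X V E \<T> x \<and> sdeg X V E \<T> x \<le> card X - 2"
  proof (intro conjI ballI)
    fix v assume vI: "v \<in> interior X V"
    show "0 \<le> sdeg X V E \<T> v" by simp
    obtain A where A: "A \<in> supp V E \<T> v" using assms(4) vI unfolding triplet_cover_def by blast
    then obtain a b c where Aeq: "A = {a,b,c}" unfolding supp_def by blast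
    have sub: "{e \<in> support_edges X V E \<T>. v \<in> e} \<subseteq> (\<lambda>y. {y,v}) ` A"
    proof
      fix e assume "e \<in> {e \<in> support_edges X V E \<T>. v \<in> e}"
      then obtain x' w where ew: "e = {x',w}" "x' \<in> X" "w \<in> interior X V"
        "\<forall>A\<in>supp V E \<T> w. x' \<in> A" "v \<in> e" unfolding support_edges_def by blast
      have "v \<noteq> x'" using vI ew(2) unfolding interior_def by blast
      then have "v = w" using ew by blast
      then show "e \<in> (\<lambda>y. {y,v}) ` A" using ew A by blast
    qed
    have finA: "finite A" using Aeq by simp
    have "sdeg X V E \<T> v \<le> card ((\<lambda>y. {y,v}) ` A)"
      unfolding sdeg_def using sub finA by (intro card_mono) auto
    also have "\<dots> \<le> card A" using finA by (rule card_image_le)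
    also have "\<dots> \<le> 3" unfolding Aeq by (simp add: card_insert_if)
    finally show "sdeg X V E \<T> v \<le> 3" .
  next
    show "1 \<le> sdeg X V E \<T> x"
    proof -
      have "finite {e \<in> support_edges X V E \<T>. x \<in> e}" using SEfin by simp
      then have "card {e \<in> support_edges X V E \<T>. x \<in> e} > 0" using uSEx card_gt_0_iff by blast
      then show ?thesis unfolding sdeg_def by simp
    qed
  next
    have "sdeg X V E \<T> x = card ((\<lambda>w. {x,w}) ` {w \<in> interior X V. \<forall>A\<in>supp V E \<T> w. x \<in> A})"
      unfolding sdeg_def SEx by simp
    also have "\<dots> \<le> card {w \<in> interior X V. \<forall>A\<in>supp V E \<T> w. x \<in> A}"
      by (rule card_image_le) (simp add: interior_def finV)
    also have "\<dots> \<le> card (interior X V)"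
      by (rule card_mono) (auto simp: interior_def finV)
    finally show "sdeg X V E \<T> x \<le> card X - 2" using intcard by simp
  qed
  have P2: "\<T>' \<subseteq> \<T> \<longrightarrow> support_edges X V E \<T> \<subseteq> support_edges X V E \<T>'
       \<and> (sdeg X V E \<T>' x = 1 \<longrightarrow> sdeg X V E \<T> x = 1)"
  proof (intro impI conjI)
    assume sub: "\<T>' \<subseteq> \<T>"
    have suppsub: "supp V E \<T>' v \<subseteq> supp V E \<T> v" for v
      using sub unfolding supp_def by blast
    show SEsub: "support_edges X V E \<T> \<subseteq> support_edges X V E \<T>'"
      unfolding support_edges_def using suppsub by blast
    assume "sdeg X V E \<T>' x = 1"
    then have "{e \<in> support_edges X V E \<T>'. x \<in> e} = {{u,x}}" using one_iff by blast
    then have "{e \<in> support_edges X V E \<T>. x \<in> e} \<subseteq> {{u,x}}" using SEsub by blast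
    then have "{e \<in> support_edges X V E \<T>. x \<in> e} = {{u,x}}" using uSEx[of \<T>] by blast
    then show "sdeg X V E \<T> x = 1" using one_iff by blast
  qed
  have P3: "minimal_triplet_cover X V E \<T> \<longrightarrow>
       (\<forall>a b. {a, b} \<in> \<T> \<longrightarrow> (\<exists>v\<in>interior X V.
          {a, v} \<in> support_edges X V E \<T> \<and> {v, b} \<in> support_edges X V E \<T>))"
  proof (intro impI allI)
    fix a b
    assume m: "minimal_triplet_cover X V E \<T>" and ab: "{a,b} \<in> \<T>"
    from m ab have nc: "\<not> triplet_cover X V E (\<T> - {{a,b}})" unfolding minimal_triplet_cover_def by blast
    have "\<T> - {{a,b}} \<subseteq> pairs X" using assms(4) unfolding triplet_cover_def by blast
    then obtain v where vI: "v \<in> interior X V" and emp: "supp V E (\<T> - {{a,b}}) v = {}"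
      using nc unfolding triplet_cover_def by blast
    have allab: "a \<in> A \<and> b \<in> A" if Asupp: "A \<in> supp V E \<T> v" for A
    proof -
      obtain p q r where A: "A = {p,q,r}" "separated V E v p q" "separated V E v p r"
        "separated V E v q r" "{p,q} \<in> \<T>" "{p,r} \<in> \<T>" "{q,r} \<in> \<T>"
        using Asupp unfolding supp_def by blast
      show "a \<in> A \<and> b \<in> A"
      proof (rule ccontr)
        assume "\<not> (a \<in> A \<and> b \<in> A)"
        then have "{p,q} \<noteq> {a,b}" "{p,r} \<noteq> {a,b}" "{q,r} \<noteq> {a,b}" using A(1) by auto
        then have "A \<in> supp V E (\<T> - {{a,b}}) v" using A unfolding supp_def by blast
        then show False using emp by simp
      qed
    qed
    have "{a,b} \<subseteq> X" using ab assms(4) pairs_sub unfolding triplet_cover_def by blast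
    then have aX: "a \<in> X" and bX: "b \<in> X" by auto
    have "{a,v} \<in> support_edges X V E \<T>"
      unfolding support_edges_def using aX vI allab by blast
    moreover have "{b,v} \<in> support_edges X V E \<T>"
      unfolding support_edges_def using bX vI allab by blast
    moreover have "{v,b} = {b,v}" by (simp add: insert_commute)
    ultimately show "\<exists>v\<in>interior X V. {a, v} \<in> support_edges X V E \<T> \<and> {v, b} \<in> support_edges X V E \<T>"
      using vI by metis
  qed
  have P4: "\<forall>v. {v, x} \<in> E \<longrightarrow>
       {v, x} \<in> support_edges X V E \<T> \<and>
       (sdeg X V E \<T> x = 1 \<longleftrightarrow> {e \<in> support_edges X V E \<T>. x \<in> e} = {{v, x}})"
  proof (intro allI impI)
    fix v assume "{v,x} \<in> E"
    then have "{x,v} \<in> E" by (simp add: insert_commute)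
    then have "v = u" by (rule xuniq)
    then show "{v, x} \<in> support_edges X V E \<T> \<and>
       (sdeg X V E \<T> x = 1 \<longleftrightarrow> {e \<in> support_edges X V E \<T>. x \<in> e} = {{v, x}})"
      using uSE one_iff by simp
  qed
  have intI': "interior (X - {x}) (del_leaf_V V E x) = interior X V - {u}"
    unfolding interior_def del_leaf_V_def ln using assms(6) by auto
  have rtsub: "remove_taxon \<T> x \<subseteq> pairs (X - {x})"
  proof
    fix p assume "p \<in> remove_taxon \<T> x"
    then have "p \<in> \<T>" "x \<notin> p" unfolding remove_taxon_def by auto
    then obtain a b where "p = {a,b}" "a \<noteq> b" "a \<in> X" "b \<in> X"
      using assms(4) pairsE unfolding triplet_cover_def by (metis subsetD)
    then show "p \<in> pairs (X - {x})" using \<open>x \<notin> p\<close> unfolding pairs_def by blast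
  qed
  have TX: "p \<in> X" if "{p,q} \<in> \<T>" for p q
    using that assms(4) pairs_sub unfolding triplet_cover_def by blast
  have P5: "card X \<ge> 4 \<longrightarrow>
       (sdeg X V E \<T> x = 1 \<longleftrightarrow>
        triplet_cover (X - {x}) (del_leaf_V V E x) (del_leaf_E E x) (remove_taxon \<T> x))"
  proof (intro impI iffI)
    assume d1: "sdeg X V E \<T> x = 1"
    have ex: "{e \<in> support_edges X V E \<T>. x \<in> e} = {{u,x}}" using one_iff d1 by blast
    show "triplet_cover (X - {x}) (del_leaf_V V E x) (del_leaf_E E x) (remove_taxon \<T> x)"
      unfolding triplet_cover_def
    proof (intro conjI ballI)
      show "remove_taxon \<T> x \<subseteq> pairs (X - {x})" by (rule rtsub)
      fix w assume "w \<in> interior (X - {x}) (del_leaf_V V E x)"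
      hence wI: "w \<in> interior X V" and wu: "w \<noteq> u" using intI' by auto
      have wx: "w \<noteq> x" using wI assms(6) unfolding interior_def by blast
      have "{x,w} \<notin> support_edges X V E \<T>"
      proof
        assume "{x,w} \<in> support_edges X V E \<T>"
        then have "{x,w} \<in> {e \<in> support_edges X V E \<T>. x \<in> e}" by simp
        then have "{x,w} = {u,x}" using ex by simp
        then show False using wu wx by (auto simp: doubleton_eq_iff)
      qed
      then obtain A where A: "A \<in> supp V E \<T> w" "x \<notin> A"
        using wI assms(6) unfolding support_edges_def by blast
      then obtain a b c where Aeq: "A = {a,b,c}" and sab: "separated V E w a b"
        and sac: "separated V E w a c" and sbc: "separated V E w b c"
        and tab: "{a,b} \<in> \<T>" and tac: "{a,c} \<in> \<T>" and tbc: "{b,c} \<in> \<T>"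
        unfolding supp_def by blast
      have inX: "a \<in> X - {x}" "b \<in> X - {x}" "c \<in> X - {x}"
        using TX[OF tab] TX[OF tbc] TX[OF tac[unfolded insert_commute[of a c]]] A(2) Aeq by auto
      have sep': "separated (del_leaf_V V E x) (del_leaf_E E x) w p q"
        if s: "separated V E w p q" and pX: "p \<in> X - {x}" and qX: "q \<in> X - {x}" for p q
      proof -
        have "p \<noteq> u" "q \<noteq> u" using pX qX uX by auto
        moreover have "p \<in> V - {w}" "q \<in> V - {w}" using s unfolding separated_def by auto
        moreover have "(p,q) \<notin> (adj {e\<in>E. w\<notin>e})\<^sup>*" using s unfolding separated_def by blast
        then have "(p,q) \<notin> (adj {e \<in> del_leaf_E E x. w \<notin> e})\<^sup>*" using lift[OF wu ln] by blast
        ultimately show ?thesis using pX qX unfolding separated_def del_leaf_V_def ln by auto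
      qed
      have rt: "{p,q} \<in> remove_taxon \<T> x" if "{p,q} \<in> \<T>" "p \<noteq> x" "q \<noteq> x" for p q
        using that unfolding remove_taxon_def by auto
      have "A \<in> supp (del_leaf_V V E x) (del_leaf_E E x) (remove_taxon \<T> x) w"
        unfolding supp_def Aeq
        using sep'[OF sab inX(1,2)] sep'[OF sac inX(1,3)] sep'[OF sbc inX(2,3)]
          rt[OF tab] rt[OF tac] rt[OF tbc] inX by blast
      then show "supp (del_leaf_V V E x) (del_leaf_E E x) (remove_taxon \<T> x) w \<noteq> {}" by blast
    qed
  next
    assume tc: "triplet_cover (X - {x}) (del_leaf_V V E x) (del_leaf_E E x) (remove_taxon \<T> x)"
    have "{e \<in> support_edges X V E \<T>. x \<in> e} = {{u,x}}"
    proof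
      show "{{u,x}} \<subseteq> {e \<in> support_edges X V E \<T>. x \<in> e}" using uSEx by blast
      show "{e \<in> support_edges X V E \<T>. x \<in> e} \<subseteq> {{u,x}}"
      proof
        fix e assume "e \<in> {e \<in> support_edges X V E \<T>. x \<in> e}"
        then obtain w where e: "e = {x,w}" "w \<in> interior X V" "\<forall>A\<in>supp V E \<T> w. x \<in> A"
          unfolding SEx by blast
        have "w = u"
        proof (rule ccontr)
          assume wu: "w \<noteq> u"
          hence "w \<in> interior (X-{x}) (del_leaf_V V E x)" using intI' e by auto
          then obtain A where "A \<in> supp (del_leaf_V V E x) (del_leaf_E E x) (remove_taxon \<T> x) w"
            using tc unfolding triplet_cover_def by blast
          then obtain a b c where Aeq: "A = {a,b,c}"
            and sab: "separated (del_leaf_V V E x) (del_leaf_E E x) w a b"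
            and sac: "separated (del_leaf_V V E x) (del_leaf_E E x) w a c"
            and sbc: "separated (del_leaf_V V E x) (del_leaf_E E x) w b c"
            and tab: "{a,b} \<in> remove_taxon \<T> x" and tac: "{a,c} \<in> remove_taxon \<T> x"
            and tbc: "{b,c} \<in> remove_taxon \<T> x"
            unfolding supp_def by blast
          have sepb: "separated V E w p q"
            if s: "separated (del_leaf_V V E x) (del_leaf_E E x) w p q" for p q
          proof -
            have pq: "p \<in> V - {w}" "q \<in> V - {w}" "p \<notin> {x,u}" "q \<notin> {x,u}"
              using s unfolding separated_def del_leaf_V_def ln by auto
            have "(p,q) \<notin> (adj {e\<in>E. w\<notin>e})\<^sup>*"
            proof
              assume "(p,q) \<in> (adj {e\<in>E. w\<notin>e})\<^sup>*"
              then have "(p,q) \<in> (adj {e \<in> del_leaf_E E x. w \<notin> e})\<^sup>*"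
                using proj[OF _ pq(3) ln xuniq] pq(4) by blast
              then show False using s unfolding separated_def by blast
            qed
            then show ?thesis using pq unfolding separated_def by blast
          qed
          have "A \<in> supp V E \<T> w"
            unfolding supp_def Aeq using sepb[OF sab] sepb[OF sac] sepb[OF sbc] tab tac tbc
            unfolding remove_taxon_def by blast
          then have "x \<in> A" using e(3) by blast
          moreover have "x \<notin> A" using tab tac unfolding Aeq remove_taxon_def by auto
          ultimately show False by simp
        qed
        then show "e \<in> {{u,x}}" using e(1) by (simp add: insert_commute)
      qed
    qed
    then show "sdeg X V E \<T> x = 1" using one_iff by blast
  qed
  have P6: "sdeg X V E \<T> x = 1 \<longrightarrow> card \<T> \<ge> card (remove_taxon \<T> x) + 2"
  proof
    obtain A where A: "A \<in> supp V E \<T> u" using assms(4) uI unfolding triplet_cover_def by blast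
    have xA: "x \<in> A" using key A .
    obtain a b c where Aeq: "A = {a,b,c}" and sab: "separated V E u a b"
        and sac: "separated V E u a c" and sbc: "separated V E u b c"
        and tab: "{a,b} \<in> \<T>" and tac: "{a,c} \<in> \<T>" and tbc: "{b,c} \<in> \<T>"
        using A unfolding supp_def by blast
    have d: "a \<noteq> b" "a \<noteq> c" "b \<noteq> c" using sep_ne[OF sab] sep_ne[OF sac] sep_ne[OF sbc] by auto
    obtain p q where pq: "{x,p} \<in> \<T>" "{x,q} \<in> \<T>" "p \<noteq> q" "p \<noteq> x" "q \<noteq> x"
    proof -
      consider "x = a" | "x = b" | "x = c" using xA Aeq by blast
      then show thesis
      proof cases
        case 1 then show thesis using that[of b c] tab tac d by simp
      next
        case 2 then show thesis using that[of a c] tab tbc d by (simp add: insert_commute)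
      next
        case 3 then show thesis using that[of a b] tac tbc d by (simp add: insert_commute)
      qed
    qed
    have "\<T> \<subseteq> Pow X" using assms(4) pairs_sub unfolding triplet_cover_def by blast
    then have finT: "finite \<T>" by (rule finite_subset) (simp add: assms(1))
    have R: "remove_taxon \<T> x \<subseteq> \<T>" unfolding remove_taxon_def by blast
    have "{{x,p},{x,q}} \<subseteq> \<T> - remove_taxon \<T> x" using pq unfolding remove_taxon_def by auto
    then have "card {{x,p},{x,q}} \<le> card (\<T> - remove_taxon \<T> x)"
      using finT by (intro card_mono) auto
    moreover have "card {{x,p},{x,q}} = 2" using pq by (auto simp: doubleton_eq_iff)
    moreover have "card (\<T> - remove_taxon \<T> x) = card \<T> - card (remove_taxon \<T> x)"
      using card_Diff_subset[OF finite_subset[OF R finT] R] .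
    moreover have "card (remove_taxon \<T> x) \<le> card \<T>" using card_mono[OF finT R] .
    ultimately show "card \<T> \<ge> card (remove_taxon \<T> x) + 2" by linarith
  qed
  show ?thesis using P1 P2 P3 P4 P5 P6 by blast
qed

end
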